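(* Fix $t\ge1$ and suppose (A1), (A3), (A4'), (A5') hold (the latter two for all $s\in[0:t-1]$), and that the maps $\mathsf P_{s;\ell}$ and $x\mapsto\partial_1\mathsf L_{s;k}(x,y)$ are differentiable so that the estimators below are defined. Then there is $c_t=c_t(t)>1$ such that, deterministically, $$\|\hat{\bm\tau}^{[t]}\|_{\mathrm{op}}\vee\|\hat{\bm\rho}^{[t]}\|_{\mathrm{op}}\le(K\Lambda)^{c_t}.$$
   Context: Notation: $[a:b]=\{a,\dots,b\}$, $[n]=[1:n]$; $\|\cdot\|_{\mathrm{op}}$ spectral norm, $\|f\|_{\mathrm{Lip}}$ Lipschitz constant; $\mathrm{diag}(\cdot)$ diagonal matrix. For $M\in\mathbb R^{(t-1)\times(t-1)}$, $\mathfrak O_t(M)\in\mathbb R^{t\times t}$ has $(\mathfrak O_t(M))_{r,s}=M_{r-1,s}$ for $r\in[2:t],s\in[1:t-1]$, other entries $0$; $\mathfrak O_1(\emptyset)=0$. Setting: $m,n\ge1$, $\phi=m/n$; $A\in\mathbb R^{m\times n}$ (any matrix) with rows $A_k^\top$; $\mu_\ast,\mu^{(0)}\in\mathbb R^n$, $\xi\in\mathbb R^m$; measurable $\mathcal F:\mathbb R^2\to\mathbb R$, $Y_k=\mathcal F(\langle A_k,\mu_\ast\rangle,\xi_k)$. Step sizes $\eta_s>0$; $\mathsf L_{s;k}:\mathbb R^2\to\mathbb R$ ($s\ge0$; $\partial_1,\partial_{11}$ derivatives in first argument), $\mathsf P_{s;\ell}:\mathbb R\to\mathbb R$ ($s\ge1$);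 $\partial_1\mathsf L_s(x,y)=(\partial_1\mathsf L_{s;k}(x_k,y_k))_k$, $\mathsf P_s(x)=(\mathsf P_{s;\ell}(x_\ell))_\ell$; $\mu^{(t)}=\mathsf P_t(\mu^{(t-1)}-\eta_{t-1}A^\top\partial_1\mathsf L_{t-1}(A\mu^{(t-1)},Y))$. Conditions ($K,\Lambda\ge2$): (A1) $1/K\le\phi\le K$; (A3) $\max_{s\in[0:t-1]}\eta_s\le\Lambda$; (A4') $\max_\ell\{|\mathsf P_{s+1;\ell}(0)|\vee\|\mathsf P_{s+1;\ell}\|_{\mathrm{Lip}}\}\le\Lambda$; (A5') $\max_k\{|\partial_1\mathsf L_{s;k}(0,\mathcal F(0,\xi_k))|\vee\|(u_1,u_2)\mapsto\partial_1\mathsf L_{s;k}(u_1,\mathcal F(u_2,\xi_k))\|_{\mathrm{Lip}}\}\le\Lambda$. Estimators (gradient descent inference algorithm): $\hat{\bm\rho}^{[0]}=\hat{\bm\rho}^{[0]}_\ell=\emptyset$; for $t\ge1$: $\hat{\bm L}^{[t]}_k=\mathrm{diag}(\{-\eta_{s-1}\partial_{11}\mathsf L_{s-1;k}((A\mu^{(s-1)})_k,Y_k)\}_{s\in[1:t]})$, $\hat{\bm\tau}^{[t]}_k=\phi[I_t-\hat{\bm L}^{[t]}_k\mathfrak O_t(\hat{\bm\rho}^{[t-1]})]^{-1}\hat{\bm L}^{[t]}_k$, $\hat{\bm\tau}^{[t]}=\frac1m\sum_k\hat{\bm\tau}^{[t]}_k$; $\hat{\bm P}^{[t]}_\ell=\mathrm{diag}(\{\mathsf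 P'_{s;\ell}((\mu^{(s-1)}-\eta_{s-1}A^\top\partial_1\mathsf L_{s-1}(A\mu^{(s-1)},Y))_\ell)\}_{s\in[1:t]})$, $\hat{\bm\rho}^{[t]}_\ell=\hat{\bm P}^{[t]}_\ell[I_t+(\hat{\bm\tau}^{[t]}+I_t)\mathfrak O_t(\hat{\bm\rho}^{[t-1]}_\ell)]$, $\hat{\bm\rho}^{[t]}=\frac1n\sum_\ell\hat{\bm\rho}^{[t]}_\ell$. *)

theory Defs
  imports "HOL-Analysis.Analysis" "Jordan_Normal_Form.Matrix"
begin

definition matvec :: "(nat \<Rightarrow> nat \<Rightarrow> real) \<Rightarrow> nat \<Rightarrow> (nat \<Rightarrow> real) \<Rightarrow> nat \<Rightarrow> real" where
  "matvec A n x k = (\<Sum>j<n. A k j * x j)"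

definition tmatvec :: "(nat \<Rightarrow> nat \<Rightarrow> real) \<Rightarrow> nat \<Rightarrow> (nat \<Rightarrow> real) \<Rightarrow> nat \<Rightarrow> real" where
  "tmatvec A m y l = (\<Sum>k<m. A k l * y k)"

definition op_norm :: "real mat \<Rightarrow> real" where
  "op_norm M = Sup {sqrt ((M *\<^sub>v x) \<bullet> (M *\<^sub>v x)) | x. x \<in> carrier_vec (dim_col M) \<and> x \<bullet> x \<le> 1}"

definition inv_mat :: "real mat \<Rightarrow> real mat" where
  "inv_mat M = (THE B. B \<in> carrier_mat (dim_row M) (dim_row M) \<and> M * B = 1\<^sub>m (dim_row M) \<and> B * M = 1\<^sub>m (dim_row M))"

text \<open>The shift operator O_t: (O_t(M))_{r,s} = M_{r-1,s} for r in [2:t], s in [1:t-1]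
  (1-based), all other entries 0. In 0-based indices: rows i in [1,t-1], cols j in [0,t-2].\<close>
definition shiftO :: "nat \<Rightarrow> real mat \<Rightarrow> real mat" where
  "shiftO t M = mat t t (\<lambda>(i, j). if 1 \<le> i \<and> j + 1 < t then M $$ (i - 1, j) else 0)"

text \<open>diag(d 1, ..., d t) (argument of d is the 1-based index s).\<close>
definition diag_mat :: "nat \<Rightarrow> (nat \<Rightarrow> real) \<Rightarrow> real mat" where
  "diag_mat t d = mat t t (\<lambda>(i, j). if i = j then d (i + 1) else 0)"

definition d1 :: "(real \<Rightarrow> real \<Rightarrow> real) \<Rightarrow> real \<Rightarrow> real \<Rightarrow> real" where
  "d1 f x y = deriv (\<lambda>u. f u y) x"

definition d11 :: "(real \<Rightarrow> real \<Rightarrow> real) \<Rightarrow> real \<Rightarrow> real \<Rightarrow> real" where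
  "d11 f x y = deriv (\<lambda>u. d1 f u y) x"

text \<open>mu^{(s)}; Lf s k = L_{s;k}, Pf s l = P_{s;l}, eta s = eta_s.\<close>
fun gd_mu :: "(nat \<Rightarrow> nat \<Rightarrow> real) \<Rightarrow> nat \<Rightarrow> nat \<Rightarrow> (nat \<Rightarrow> real) \<Rightarrow> (nat \<Rightarrow> real)
    \<Rightarrow> (nat \<Rightarrow> nat \<Rightarrow> real \<Rightarrow> real \<Rightarrow> real) \<Rightarrow> (nat \<Rightarrow> nat \<Rightarrow> real \<Rightarrow> real)
    \<Rightarrow> (nat \<Rightarrow> real) \<Rightarrow> nat \<Rightarrow> nat \<Rightarrow> real" where
  "gd_mu A m n Y eta Lf Pf mu0 0 = mu0"
| "gd_mu A m n Y eta Lf Pf mu0 (Suc s) =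
     (let mu = gd_mu A m n Y eta Lf Pf mu0 s in
      (\<lambda>l. Pf (Suc s) l (mu l - eta s *
           tmatvec A m (\<lambda>k. d1 (Lf s k) (matvec A n mu k) (Y k)) l)))"

definition gd_pre :: "(nat \<Rightarrow> nat \<Rightarrow> real) \<Rightarrow> nat \<Rightarrow> nat \<Rightarrow> (nat \<Rightarrow> real) \<Rightarrow> (nat \<Rightarrow> real)
    \<Rightarrow> (nat \<Rightarrow> nat \<Rightarrow> real \<Rightarrow> real \<Rightarrow> real) \<Rightarrow> (nat \<Rightarrow> nat \<Rightarrow> real \<Rightarrow> real)
    \<Rightarrow> (nat \<Rightarrow> real) \<Rightarrow> nat \<Rightarrow> nat \<Rightarrow> real" where
  "gd_pre A m n Y eta Lf Pf mu0 s l =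
     (let mu = gd_mu A m n Y eta Lf Pf mu0 s in
      mu l - eta s * tmatvec A m (\<lambda>k. d1 (Lf s k) (matvec A n mu k) (Y k)) l)"

text \<open>Given diagonal entries lf k s (entries of L-hat_k, s in [1:t]) and pf l s
  (entries of P-hat_l), compute rho-hat^{[t]}_l for all l.\<close>

definition avg_mat :: "nat \<Rightarrow> nat \<Rightarrow> (nat \<Rightarrow> real mat) \<Rightarrow> real mat" where
  "avg_mat t N f = mat t t (\<lambda>ij. (1 / real N) * (\<Sum>i<N. f i $$ ij))"

definition tau_k :: "nat \<Rightarrow> real \<Rightarrow> (nat \<Rightarrow> nat \<Rightarrow> real) \<Rightarrow> real mat \<Rightarrow> nat \<Rightarrow> real mat" where
  "tau_k t phi lf rhobar_prev k =
     phi \<cdot>\<^sub>m (inv_mat (1\<^sub>m t - diag_mat t (lf k) * shiftO t rhobar_prev) * diag_mat t (lf k))"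

fun rho_all :: "nat \<Rightarrow> nat \<Rightarrow> real \<Rightarrow> (nat \<Rightarrow> nat \<Rightarrow> real) \<Rightarrow> (nat \<Rightarrow> nat \<Rightarrow> real)
    \<Rightarrow> nat \<Rightarrow> nat \<Rightarrow> real mat" where
  "rho_all m n phi lf pf 0 = (\<lambda>l. 0\<^sub>m 0 0)"
| "rho_all m n phi lf pf (Suc t) =
     (let rl = rho_all m n phi lf pf t;
          rb = avg_mat t n rl;
          tau = avg_mat (Suc t) m (tau_k (Suc t) phi lf rb) in
      (\<lambda>l. diag_mat (Suc t) (pf l) *
             (1\<^sub>m (Suc t) + (tau + 1\<^sub>m (Suc t)) * shiftO (Suc t) (rl l))))"

definition rho_hat :: "nat \<Rightarrow> nat \<Rightarrow> real \<Rightarrow> (nat \<Rightarrow> nat \<Rightarrow> real) \<Rightarrow> (nat \<Rightarrow> nat \<Rightarrow> real)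
    \<Rightarrow> nat \<Rightarrow> real mat" where
  "rho_hat m n phi lf pf t = avg_mat t n (rho_all m n phi lf pf t)"

definition tau_hat :: "nat \<Rightarrow> nat \<Rightarrow> real \<Rightarrow> (nat \<Rightarrow> nat \<Rightarrow> real) \<Rightarrow> (nat \<Rightarrow> nat \<Rightarrow> real)
    \<Rightarrow> nat \<Rightarrow> real mat" where
  "tau_hat m n phi lf pf t = avg_mat t m (tau_k t phi lf (rho_hat m n phi lf pf (t - 1)))"

definition gd_lf :: "(nat \<Rightarrow> nat \<Rightarrow> real) \<Rightarrow> nat \<Rightarrow> nat \<Rightarrow> (nat \<Rightarrow> real) \<Rightarrow> (nat \<Rightarrow> real)
    \<Rightarrow> (nat \<Rightarrow> nat \<Rightarrow> real \<Rightarrow> real \<Rightarrow> real) \<Rightarrow> (nat \<Rightarrow> nat \<Rightarrow> real \<Rightarrow> real)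
    \<Rightarrow> (nat \<Rightarrow> real) \<Rightarrow> nat \<Rightarrow> nat \<Rightarrow> real" where
  "gd_lf A m n Y eta Lf Pf mu0 k s =
     - eta (s - 1) * d11 (Lf (s - 1) k)
         (matvec A n (gd_mu A m n Y eta Lf Pf mu0 (s - 1)) k) (Y k)"

definition gd_pf :: "(nat \<Rightarrow> nat \<Rightarrow> real) \<Rightarrow> nat \<Rightarrow> nat \<Rightarrow> (nat \<Rightarrow> real) \<Rightarrow> (nat \<Rightarrow> real)
    \<Rightarrow> (nat \<Rightarrow> nat \<Rightarrow> real \<Rightarrow> real \<Rightarrow> real) \<Rightarrow> (nat \<Rightarrow> nat \<Rightarrow> real \<Rightarrow> real)
    \<Rightarrow> (nat \<Rightarrow> real) \<Rightarrow> nat \<Rightarrow> nat \<Rightarrow> real" where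
  "gd_pf A m n Y eta Lf Pf mu0 l s =
     deriv (Pf s l) (gd_pre A m n Y eta Lf Pf mu0 (s - 1) l)"

end

theory Submission
  imports Defs "Jordan_Normal_Form.Determinant"
begin


definition entbd :: "real mat \<Rightarrow> real \<Rightarrow> bool" where
  "entbd M B \<longleftrightarrow> (\<forall>i<dim_row M. \<forall>j<dim_col M. \<bar>M $$ (i,j)\<bar> \<le> B)"

definition band :: "nat \<Rightarrow> real mat \<Rightarrow> bool" where
  "band d M \<longleftrightarrow> (\<forall>i<dim_row M. \<forall>j<dim_col M. i < j + d \<longrightarrow> M $$ (i,j) = 0)"

lemma nat_le_pow: "(X::real) \<ge> 2 \<Longrightarrow> real k \<le> X ^ k"
proof -
  assume X: "X \<ge> 2"
  have "real k \<le> 2 ^ k" using less_exp[of k] by (metis of_nat_le_iff of_nat_numeral of_nat_power less_imp_le_nat)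
  also have "\<dots> \<le> X ^ k" using X by (intro power_mono) auto
  finally show ?thesis .
qed

lemma pow_mono_X: "(X::real) \<ge> 2 \<Longrightarrow> a \<le> b \<Longrightarrow> X ^ a \<le> X ^ b"
  by (rule power_increasing) auto

lemma entbd_mono: "entbd M B \<Longrightarrow> B \<le> B' \<Longrightarrow> entbd M B'"
  unfolding entbd_def by force

lemma mult_entry: "A \<in> carrier_mat r k \<Longrightarrow> B \<in> carrier_mat k c \<Longrightarrow> i < r \<Longrightarrow> j < c \<Longrightarrow>
  (A * B) $$ (i,j) = (\<Sum>l<k. A $$ (i,l) * B $$ (l,j))"
  by (auto simp: scalar_prod_def atLeast0LessThan intro!: sum.cong)

lemma entbd_mult:
  assumes A: "A \<in> carrier_mat r k" and B: "B \<in> carrier_mat k c"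
    and eA: "entbd A (X ^ a)" and eB: "entbd B (X ^ b)" and X: "(X::real) \<ge> 2" and e: "k + a + b \<le> e"
  shows "entbd (A * B) (X ^ e)"
  unfolding entbd_def
proof (intro allI impI)
  fix i j assume i: "i < dim_row (A * B)" and j: "j < dim_col (A * B)"
  have i': "i < r" and j': "j < c" using i j A B by auto
  have "\<bar>(A * B) $$ (i,j)\<bar> = \<bar>\<Sum>l<k. A $$ (i,l) * B $$ (l,j)\<bar>" using mult_entry[OF A B i' j'] by simp
  also have "\<dots> \<le> (\<Sum>l<k. \<bar>A $$ (i,l)\<bar> * \<bar>B $$ (l,j)\<bar>)" by (rule order_trans[OF sum_abs], simp add: abs_mult)
  also have "\<dots> \<le> (\<Sum>l<k. X ^ a * X ^ b)"
  proof (rule sum_mono)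
    fix l assume l: "l \<in> {..<k}"
    have "\<bar>A $$ (i,l)\<bar> \<le> X ^ a" using eA i' l A unfolding entbd_def by auto
    moreover have "\<bar>B $$ (l,j)\<bar> \<le> X ^ b" using eB j' l B unfolding entbd_def by auto
    ultimately show "\<bar>A $$ (i,l)\<bar> * \<bar>B $$ (l,j)\<bar> \<le> X ^ a * X ^ b" by (intro mult_mono) auto
  qed
  also have "\<dots> = real k * X ^ (a + b)" by (simp add: power_add)
  also have "\<dots> \<le> X ^ k * X ^ (a + b)" using nat_le_pow[OF X, of k] X by (intro mult_right_mono) auto
  also have "\<dots> = X ^ (k + a + b)" by (simp add: power_add)
  also have "\<dots> \<le> X ^ e" using pow_mono_X[OF X e] .
  finally show "\<bar>(A * B) $$ (i,j)\<bar> \<le> X ^ e" .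
qed

lemma entbd_add:
  assumes A: "A \<in> carrier_mat r c" and B: "B \<in> carrier_mat r c"
    and eA: "entbd A (X ^ a)" and eB: "entbd B (X ^ b)" and X: "(X::real) \<ge> 2" and e: "a < e" "b < e"
  shows "entbd (A + B) (X ^ e)" "entbd (A - B) (X ^ e)"
proof -
  have h: "\<bar>A $$ (i,j)\<bar> + \<bar>B $$ (i,j)\<bar> \<le> X ^ e" if "i < r" "j < c" for i j
  proof -
    have "\<bar>A $$ (i,j)\<bar> \<le> X ^ a" "\<bar>B $$ (i,j)\<bar> \<le> X ^ b" using eA eB that A B unfolding entbd_def by auto
    moreover have "X ^ a \<le> X ^ (e - 1)" "X ^ b \<le> X ^ (e - 1)" using e X by (auto intro: pow_mono_X)
    moreover have "X ^ e = X * X ^ (e - 1)" using e by (metis Suc_pred' gr_zeroI not_less0 power_Suc)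
    moreover have "X ^ (e - 1) \<ge> 0" using X by simp
    moreover have "2 * X ^ (e - 1) \<le> X * X ^ (e - 1)" using X by (intro mult_right_mono) auto
    ultimately show ?thesis by linarith
  qed
  show "entbd (A + B) (X ^ e)" unfolding entbd_def using A B h
    by (auto intro: order_trans[OF abs_triangle_ineq])
  show "entbd (A - B) (X ^ e)" unfolding entbd_def using A B h
    by (auto intro: order_trans[OF abs_triangle_ineq4])
qed

lemma entbd_smult:
  assumes eB: "entbd B (X ^ b)" and X: "(X::real) \<ge> 2" and c: "\<bar>c\<bar> \<le> X ^ a" and e: "a + b \<le> e"
  shows "entbd (c \<cdot>\<^sub>m B) (X ^ e)"
  unfolding entbd_def
proof (intro allI impI)
  fix i j assume "i < dim_row (c \<cdot>\<^sub>m B)" "j < dim_col (c \<cdot>\<^sub>m B)"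
  then have ij: "i < dim_row B" "j < dim_col B" by auto
  have "\<bar>(c \<cdot>\<^sub>m B) $$ (i,j)\<bar> = \<bar>c\<bar> * \<bar>B $$ (i,j)\<bar>" using ij by (simp add: abs_mult)
  also have "\<dots> \<le> X ^ a * X ^ b" using eB ij c unfolding entbd_def by (intro mult_mono) auto
  also have "\<dots> \<le> X ^ e" using pow_mono_X[OF X e] by (simp add: power_add)
  finally show "\<bar>(c \<cdot>\<^sub>m B) $$ (i,j)\<bar> \<le> X ^ e" .
qed

lemma entbd_one: "(X::real) \<ge> 2 \<Longrightarrow> entbd (1\<^sub>m t) (X ^ a)"
  unfolding entbd_def by (auto simp: one_le_power)

lemma entbd_diag: "(X::real) \<ge> 2 \<Longrightarrow> (\<forall>s\<in>{1..t}. \<bar>d s\<bar> \<le> X ^ a) \<Longrightarrow> entbd (diag_mat t d) (X ^ a)"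
  unfolding entbd_def diag_mat_def by auto

lemma entbd_shift: "(X::real) \<ge> 2 \<Longrightarrow> M \<in> carrier_mat (t - 1) (t - 1) \<Longrightarrow> entbd M (X ^ a) \<Longrightarrow> entbd (shiftO t M) (X ^ a)"
  unfolding entbd_def shiftO_def by auto

lemma entbd_avg:
  assumes X: "(X::real) \<ge> 2" and f: "\<And>i. i < N \<Longrightarrow> f i \<in> carrier_mat t t \<and> entbd (f i) (X ^ a)"
  shows "entbd (avg_mat t N f) (X ^ a)"
  unfolding entbd_def avg_mat_def
proof (intro allI impI)
  fix i j assume "i < dim_row (mat t t (\<lambda>ij. 1 / real N * (\<Sum>i<N. f i $$ ij)))"
    "j < dim_col (mat t t (\<lambda>ij. 1 / real N * (\<Sum>i<N. f i $$ ij)))"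
  then have ij: "i < t" "j < t" by auto
  have "\<bar>\<Sum>l<N. f l $$ (i,j)\<bar> \<le> (\<Sum>l<N. X ^ a)"
  proof (rule order_trans[OF sum_abs], rule sum_mono)
    fix l assume "l \<in> {..<N}"
    then have "f l \<in> carrier_mat t t" "entbd (f l) (X ^ a)" using f by auto
    then show "\<bar>f l $$ (i,j)\<bar> \<le> X ^ a" using ij unfolding entbd_def by auto
  qed
  then have "\<bar>\<Sum>l<N. f l $$ (i,j)\<bar> \<le> real N * X ^ a" by simp
  then have "\<bar>1 / real N * (\<Sum>l<N. f l $$ (i,j))\<bar> \<le> X ^ a"
    using X by (cases "N = 0") (auto simp: abs_mult field_simps)
  then show "\<bar>mat t t (\<lambda>ij. 1 / real N * (\<Sum>i<N. f i $$ ij)) $$ (i, j)\<bar> \<le> X ^ a" using ij by simp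
qed



lemma band_mono: "band b M \<Longrightarrow> a \<le> b \<Longrightarrow> band a M"
  unfolding band_def by force

lemma band_mult:
  assumes A: "A \<in> carrier_mat r k" and B: "B \<in> carrier_mat k c"
    and bA: "band a A" and bB: "band b B"
  shows "band (a + b) (A * B)"
  unfolding band_def
proof (intro allI impI)
  fix i j assume i: "i < dim_row (A * B)" and j: "j < dim_col (A * B)" and ij: "i < j + (a + b)"
  have i': "i < r" and j': "j < c" using i j A B by auto
  have "(A * B) $$ (i,j) = (\<Sum>l<k. A $$ (i,l) * B $$ (l,j))" using mult_entry[OF A B i' j'] by simp
  also have "\<dots> = 0"
  proof (rule sum.neutral, intro ballI)
    fix l assume l: "l \<in> {..<k}"
    show "A $$ (i,l) * B $$ (l,j) = 0"
    proof (cases "i < l + a")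
      case True then show ?thesis using bA i' l A unfolding band_def by auto
    next
      case False then have "l < j + b" using ij by auto
      then show ?thesis using bB j' l B unfolding band_def by auto
    qed
  qed
  finally show "(A * B) $$ (i,j) = 0" .
qed

lemma band_add:
  assumes A: "A \<in> carrier_mat r c" and B: "B \<in> carrier_mat r c" and "band a A" "band a B"
  shows "band a (A + B)" "band a (A - B)"
  using assms unfolding band_def by auto

lemma band_smult: "band a B \<Longrightarrow> band a (x \<cdot>\<^sub>m B)"
  unfolding band_def by auto

lemma band_one: "band 0 (1\<^sub>m t)"
  unfolding band_def by auto

lemma band_diag: "band 0 (diag_mat t d)"
  unfolding band_def diag_mat_def by auto

lemma band_shift: "M \<in> carrier_mat (t - 1) (t - 1) \<Longrightarrow> band a M \<Longrightarrow> band (a + 1) (shiftO t M)"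
  unfolding band_def shiftO_def by auto

lemma band_avg:
  assumes f: "\<And>i. i < N \<Longrightarrow> f i \<in> carrier_mat t t \<and> band a (f i)"
  shows "band a (avg_mat t N f)"
  unfolding band_def avg_mat_def
proof (intro allI impI)
  fix i j assume "i < dim_row (mat t t (\<lambda>ij. 1 / real N * (\<Sum>i<N. f i $$ ij)))"
    "j < dim_col (mat t t (\<lambda>ij. 1 / real N * (\<Sum>i<N. f i $$ ij)))" and ij: "i < j + a"
  then have ij': "i < t" "j < t" by auto
  have "(\<Sum>l<N. f l $$ (i,j)) = 0"
  proof (rule sum.neutral, intro ballI)
    fix l assume "l \<in> {..<N}"
    then have "f l \<in> carrier_mat t t" "band a (f l)" using f by auto
    then show "f l $$ (i,j) = 0" using ij ij' unfolding band_def by auto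
  qed
  then show "mat t t (\<lambda>ij. 1 / real N * (\<Sum>i<N. f i $$ ij)) $$ (i, j) = 0" using ij' by simp
qed

lemma carrier_avg: "avg_mat t N f \<in> carrier_mat t t"
  unfolding avg_mat_def by auto

lemma carrier_diag: "diag_mat t d \<in> carrier_mat t t"
  unfolding diag_mat_def by auto

lemma carrier_shift: "shiftO t M \<in> carrier_mat t t"
  unfolding shiftO_def by auto

fun mpow :: "real mat \<Rightarrow> nat \<Rightarrow> real mat" where
  "mpow N 0 = 1\<^sub>m (dim_row N)"
| "mpow N (Suc j) = N * mpow N j"

fun psum :: "real mat \<Rightarrow> nat \<Rightarrow> real mat" where
  "psum N 0 = 0\<^sub>m (dim_row N) (dim_row N)"
| "psum N (Suc j) = psum N j + mpow N j"

lemma mpow_carrier: "N \<in> carrier_mat t t \<Longrightarrow> mpow N j \<in> carrier_mat t t"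
  by (induction j) auto

lemma psum_carrier: "N \<in> carrier_mat t t \<Longrightarrow> psum N j \<in> carrier_mat t t"
  by (induction j) (auto simp: mpow_carrier)

lemma mpow_band: "N \<in> carrier_mat t t \<Longrightarrow> band 1 N \<Longrightarrow> band j (mpow N j)"
proof (induction j)
  case 0 then show ?case using band_one by auto
next
  case (Suc j)
  have "band (1 + j) (N * mpow N j)" using band_mult[OF Suc.prems(1) mpow_carrier[OF Suc.prems(1)], of 1 j] Suc by auto
  then show ?case by simp
qed

lemma mpow_entbd: "N \<in> carrier_mat t t \<Longrightarrow> entbd N (X ^ a) \<Longrightarrow> (X::real) \<ge> 2 \<Longrightarrow> entbd (mpow N j) (X ^ (j * (t + a)))"
proof (induction j)
  case 0 then show ?case using entbd_one[of X t 0] by auto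
next
  case (Suc j)
  show ?case using entbd_mult[OF Suc.prems(1) mpow_carrier[OF Suc.prems(1)] Suc.prems(2) Suc.IH[OF Suc.prems] Suc.prems(3), of "Suc j * (t + a)"]
    by simp
qed

lemma psum_band: "N \<in> carrier_mat t t \<Longrightarrow> band 1 N \<Longrightarrow> band 0 (psum N j)"
proof (induction j)
  case 0 then show ?case unfolding band_def by auto
next
  case (Suc j)
  then show ?case using band_add(1)[OF psum_carrier[OF Suc.prems(1)] mpow_carrier[OF Suc.prems(1)], of 0 j j]
      mpow_band[OF Suc.prems, of j] band_mono[of j "mpow N j" 0] by auto
qed

lemma psum_entbd: "N \<in> carrier_mat t t \<Longrightarrow> entbd N (X ^ a) \<Longrightarrow> (X::real) \<ge> 2 \<Longrightarrow> entbd (psum N j) (X ^ (j * (t + a) + j))"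
proof (induction j)
  case 0 then show ?case unfolding entbd_def by auto
next
  case (Suc j)
  show ?case using entbd_add(1)[OF psum_carrier[OF Suc.prems(1)] mpow_carrier[OF Suc.prems(1)] Suc.IH[OF Suc.prems]
      mpow_entbd[OF Suc.prems] Suc.prems(3), of "Suc j * (t + a) + Suc j"] by simp
qed

lemma band_zero: "M \<in> carrier_mat t t \<Longrightarrow> band t M \<Longrightarrow> M = 0\<^sub>m t t"
  unfolding band_def by (intro eq_matI) auto

lemma telescope: "N \<in> carrier_mat t t \<Longrightarrow> (1\<^sub>m t - N) * psum N j = 1\<^sub>m t - mpow N j"
proof (induction j)
  case 0
  then show ?case by (intro eq_matI) (auto simp: mult_entry)
next
  case (Suc j)
  have N: "N \<in> carrier_mat t t" by fact
  have P: "psum N j \<in> carrier_mat t t" and Q: "mpow N j \<in> carrier_mat t t"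
    using psum_carrier[OF N] mpow_carrier[OF N] by auto
  have "(1\<^sub>m t - N) * psum N (Suc j) = (1\<^sub>m t - N) * psum N j + (1\<^sub>m t - N) * mpow N j"
    using mult_add_distrib_mat[OF _ P Q, of "1\<^sub>m t - N" t] N by (simp add: minus_carrier_mat)
  also have "(1\<^sub>m t - N) * mpow N j = mpow N j - N * mpow N j"
    using minus_mult_distrib_mat[OF one_carrier_mat N Q] Q by simp
  finally show ?case using Suc.IH[OF N] P Q N by (intro eq_matI) auto
qed

lemma inv_mat_tri:
  assumes N: "N \<in> carrier_mat t t" and b: "band 1 N"
  shows "inv_mat (1\<^sub>m t - N) = psum N t"
proof -
  let ?M = "1\<^sub>m t - N" and ?P = "psum N t"
  have M: "?M \<in> carrier_mat t t" using N by auto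
  have P: "?P \<in> carrier_mat t t" using psum_carrier[OF N] .
  have z: "mpow N t = 0\<^sub>m t t" using band_zero[OF mpow_carrier[OF N] mpow_band[OF N b]] .
  have MP: "?M * ?P = 1\<^sub>m t" using telescope[OF N, of t] z by (intro eq_matI) auto
  have PM: "?P * ?M = 1\<^sub>m t" using mat_mult_left_right_inverse[OF M P MP] .
  have dr: "dim_row ?M = t" using N by auto
  show ?thesis unfolding inv_mat_def dr
  proof (rule the_equality)
    show "?P \<in> carrier_mat t t \<and> ?M * ?P = 1\<^sub>m t \<and> ?P * ?M = 1\<^sub>m t" using P MP PM by auto
  next
    fix B assume B: "B \<in> carrier_mat t t \<and> ?M * B = 1\<^sub>m t \<and> B * ?M = 1\<^sub>m t"
    have "B = B * (?M * ?P)" using B MP right_mult_one_mat[of B t t] by auto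
    also have "\<dots> = (B * ?M) * ?P" using assoc_mult_mat[of B t t ?M t ?P t] B M P by auto
    also have "\<dots> = ?P" using B P left_mult_one_mat[of ?P t t] by auto
    finally show "B = ?P" .
  qed
qed



lemma deriv_lip_bound:
  fixes f :: "real \<Rightarrow> real"
  assumes d: "f differentiable (at x)" and L: "L-lipschitz_on UNIV f"
  shows "\<bar>deriv f x\<bar> \<le> L"
proof -
  have "DERIV f x :> deriv f x" using d DERIV_deriv_iff_real_differentiable by blast
  then have lim: "((\<lambda>h. (f (x + h) - f x) / h) \<longlongrightarrow> deriv f x) (at 0)" by (simp add: DERIV_def)
  have lim2: "((\<lambda>h. \<bar>(f (x + h) - f x) / h\<bar>) \<longlongrightarrow> \<bar>deriv f x\<bar>) (at 0)" using tendsto_rabs[OF lim] .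
  have ev: "eventually (\<lambda>h. \<bar>(f (x + h) - f x) / h\<bar> \<le> L) (at (0::real))"
  proof (rule eventually_at_filter[THEN iffD2], rule always_eventually, intro allI impI)
    fix h :: real assume "h \<noteq> 0" "h \<in> UNIV"
    have "dist (f (x + h)) (f x) \<le> L * dist (x + h) x" using L unfolding lipschitz_on_def by blast
    then have "\<bar>f (x + h) - f x\<bar> \<le> L * \<bar>h\<bar>" by (simp add: dist_real_def)
    then show "\<bar>(f (x + h) - f x) / h\<bar> \<le> L" using \<open>h \<noteq> 0\<close> by (simp add: abs_divide divide_le_eq)
  qed
  show ?thesis by (rule tendsto_upperbound[OF lim2 ev]) simp
qed

lemma op_norm_bound:
  assumes M: "M \<in> carrier_mat r c" and e: "entbd M (X ^ a)" and X: "(X::real) \<ge> 2"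
  shows "op_norm M \<le> X ^ (r + c + a)"
  unfolding op_norm_def
proof (rule cSup_least)
  show "{sqrt ((M *\<^sub>v x) \<bullet> (M *\<^sub>v x)) |x. x \<in> carrier_vec (dim_col M) \<and> x \<bullet> x \<le> 1} \<noteq> {}"
  proof -
    have "0\<^sub>v (dim_col M) \<bullet> 0\<^sub>v (dim_col M) \<le> (1::real)" by (simp add: scalar_prod_def)
    moreover have "0\<^sub>v (dim_col M) \<in> carrier_vec (dim_col M)" by simp
    ultimately show ?thesis by blast
  qed
next
  fix y assume "y \<in> {sqrt ((M *\<^sub>v x) \<bullet> (M *\<^sub>v x)) |x. x \<in> carrier_vec (dim_col M) \<and> x \<bullet> x \<le> 1}"
  then obtain x where y: "y = sqrt ((M *\<^sub>v x) \<bullet> (M *\<^sub>v x))" and x: "x \<in> carrier_vec c" and xx: "(x :: real vec) \<bullet> x \<le> 1"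
    using M by auto
  have Xa: "X ^ a \<ge> 0" using X by simp
  have xj: "\<bar>x $ j\<bar> \<le> 1" if j: "j < c" for j
  proof -
    have "x $ j * x $ j \<le> (\<Sum>i\<in>{0..<c}. x $ i * x $ i)"
      by (rule member_le_sum) (use j in auto)
    also have "\<dots> = x \<bullet> x" using x by (simp add: scalar_prod_def)
    finally have "\<bar>x $ j\<bar>^2 \<le> 1 ^ 2" using xx by (simp add: power2_eq_square)
    then show ?thesis by (rule power2_le_imp_le) simp
  qed
  have Mi: "\<bar>(M *\<^sub>v x) $ i\<bar> \<le> real c * X ^ a" if i: "i < r" for i
  proof -
    have "(M *\<^sub>v x) $ i = (\<Sum>j\<in>{0..<c}. M $$ (i,j) * x $ j)"
      using M x i by (simp add: scalar_prod_def)
    also have "\<bar>\<dots>\<bar> \<le> (\<Sum>j\<in>{0..<c}. X ^ a)"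
    proof (rule order_trans[OF sum_abs], rule sum_mono)
      fix j assume j: "j \<in> {0..<c}"
      have "\<bar>M $$ (i,j)\<bar> \<le> X ^ a" using e M i j unfolding entbd_def by auto
      then show "\<bar>M $$ (i,j) * x $ j\<bar> \<le> X ^ a" using xj[of j] j
        by (simp add: abs_mult) (metis abs_ge_zero mult_mono mult.right_neutral Xa)
    qed
    finally show ?thesis by simp
  qed
  have "(M *\<^sub>v x) \<bullet> (M *\<^sub>v x) = (\<Sum>i\<in>{0..<r}. (M *\<^sub>v x) $ i * (M *\<^sub>v x) $ i)"
    using M by (simp add: scalar_prod_def)
  also have "\<dots> \<le> (\<Sum>i\<in>{0..<r}. (real c * X ^ a)^2)"
  proof (rule sum_mono)
    fix i assume "i \<in> {0..<r}"
    then have "\<bar>(M *\<^sub>v x) $ i\<bar>^2 \<le> (real c * X ^ a)^2" using Mi[of i]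
      by (intro power_mono) auto
    then show "(M *\<^sub>v x) $ i * (M *\<^sub>v x) $ i \<le> (real c * X ^ a)^2" by (simp add: power2_eq_square)
  qed
  also have "\<dots> = real r * (real c * X ^ a)^2" by simp
  also have "\<dots> \<le> (real r * (real c * X ^ a))^2"
  proof -
    have "real r \<le> real r ^ 2" by (cases r) (auto simp: power2_eq_square)
    then show ?thesis by (simp add: power_mult_distrib mult_right_mono)
  qed
  finally have "y \<le> real r * (real c * X ^ a)" using y Xa
    by (metis real_sqrt_le_iff real_sqrt_abs abs_of_nonneg mult_nonneg_nonneg of_nat_0_le_iff)
  also have "\<dots> \<le> X ^ r * (X ^ c * X ^ a)"
    using nat_le_pow[OF X, of r] nat_le_pow[OF X, of c] Xa X
    by (intro mult_mono) auto
  also have "\<dots> = X ^ (r + c + a)" by (simp add: power_add)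
  finally show "y \<le> X ^ (r + c + a)" .
qed

definition TE :: "nat \<Rightarrow> nat \<Rightarrow> nat" where
  "TE T r = 1 + (T + (T * (T + (T + 2 + r)) + T) + 2)"

lemma tau_k_bound:
  assumes X: "(X::real) \<ge> 2" and rb: "rb \<in> carrier_mat (T - 1) (T - 1)" "band 0 rb" "entbd rb (X ^ r)"
    and phi: "\<bar>phi\<bar> \<le> X ^ 1" and lf: "\<forall>s\<in>{1..T}. \<bar>lf k s\<bar> \<le> X ^ 2"
  shows "tau_k T phi lf rb k \<in> carrier_mat T T \<and> band 0 (tau_k T phi lf rb k) \<and> entbd (tau_k T phi lf rb k) (X ^ TE T r)"
proof -
  let ?D = "diag_mat T (lf k)" and ?S = "shiftO T rb"
  let ?N = "?D * ?S"
  have D: "?D \<in> carrier_mat T T" "band 0 ?D" "entbd ?D (X ^ 2)"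
    using carrier_diag band_diag entbd_diag[OF X lf] by auto
  have S: "?S \<in> carrier_mat T T" "band 1 ?S" "entbd ?S (X ^ r)"
    using carrier_shift band_shift[OF rb(1,2)] entbd_shift[OF X rb(1,3)] by auto
  have N: "?N \<in> carrier_mat T T" "band 1 ?N" "entbd ?N (X ^ (T + 2 + r))"
    using D S band_mult[OF D(1) S(1) D(2) S(2)] entbd_mult[OF D(1) S(1) D(3) S(3) X, of "T + 2 + r"] by auto
  have inv: "inv_mat (1\<^sub>m T - ?N) = psum ?N T" using inv_mat_tri[OF N(1,2)] .
  have P: "psum ?N T \<in> carrier_mat T T" "band 0 (psum ?N T)" "entbd (psum ?N T) (X ^ (T * (T + (T + 2 + r)) + T))"
    using psum_carrier[OF N(1)] psum_band[OF N(1,2)] psum_entbd[OF N(1) N(3) X] by auto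
  have PD: "psum ?N T * ?D \<in> carrier_mat T T" "band 0 (psum ?N T * ?D)"
     "entbd (psum ?N T * ?D) (X ^ (T + (T * (T + (T + 2 + r)) + T) + 2))"
    using P D band_mult[OF P(1) D(1) P(2) D(2)] entbd_mult[OF P(1) D(1) P(3) D(3) X, of "T + (T * (T + (T + 2 + r)) + T) + 2"] by auto
  show ?thesis unfolding tau_k_def inv TE_def
    using PD band_smult entbd_smult[OF PD(3) X phi, of "TE T r"] unfolding TE_def by auto
qed



fun RE :: "nat \<Rightarrow> nat" where
  "RE 0 = 0"
| "RE (Suc t') = Suc t' + 1 + (Suc t' + (TE (Suc t') (RE t') + 1) + RE t' + 1)"

lemma rho_bound:
  assumes X: "(X::real) \<ge> 2" and phi: "\<bar>phi\<bar> \<le> X ^ 1"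
    and lf: "\<forall>k<m. \<forall>s\<in>{1..t}. \<bar>lf k s\<bar> \<le> X ^ 2"
    and pf: "\<forall>l<n. \<forall>s\<in>{1..t}. \<bar>pf l s\<bar> \<le> X ^ 1"
  shows "t' \<le> t \<Longrightarrow> \<forall>l<n. rho_all m n phi lf pf t' l \<in> carrier_mat t' t' \<and> band 0 (rho_all m n phi lf pf t' l)
      \<and> entbd (rho_all m n phi lf pf t' l) (X ^ RE t')"
proof (induction t')
  case 0
  then show ?case by (auto simp: band_def entbd_def)
next
  case (Suc t')
  let ?rl = "rho_all m n phi lf pf t'"
  let ?rb = "avg_mat t' n ?rl"
  let ?T = "Suc t'"
  have IH: "\<forall>l<n. ?rl l \<in> carrier_mat t' t' \<and> band 0 (?rl l) \<and> entbd (?rl l) (X ^ RE t')"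
    using Suc by auto
  have rb: "?rb \<in> carrier_mat (?T - 1) (?T - 1)" "band 0 ?rb" "entbd ?rb (X ^ RE t')"
    using carrier_avg band_avg[where N=n and t=t' and f= ?rl and a=0] entbd_avg[OF X, where N=n and f= ?rl and t=t' and a="RE t'"] IH by auto
  let ?tau = "avg_mat ?T m (tau_k ?T phi lf ?rb)"
  let ?te = "TE ?T (RE t')"
  have tk: "\<And>k. k < m \<Longrightarrow> tau_k ?T phi lf ?rb k \<in> carrier_mat ?T ?T \<and> band 0 (tau_k ?T phi lf ?rb k)
      \<and> entbd (tau_k ?T phi lf ?rb k) (X ^ ?te)"
  proof -
    fix k assume k: "k < m"
    have "\<forall>s\<in>{1..?T}. \<bar>lf k s\<bar> \<le> X ^ 2" using lf k Suc.prems by auto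
    then show "tau_k ?T phi lf ?rb k \<in> carrier_mat ?T ?T \<and> band 0 (tau_k ?T phi lf ?rb k)
      \<and> entbd (tau_k ?T phi lf ?rb k) (X ^ ?te)"
      using tau_k_bound[OF X rb phi] by blast
  qed
  have tau: "?tau \<in> carrier_mat ?T ?T" "band 0 ?tau" "entbd ?tau (X ^ ?te)"
    using carrier_avg band_avg[where N=m and t= ?T and a=0] entbd_avg[OF X, where N=m and t= ?T and a= ?te] tk by auto
  have tau1: "?tau + 1\<^sub>m ?T \<in> carrier_mat ?T ?T" "band 0 (?tau + 1\<^sub>m ?T)" "entbd (?tau + 1\<^sub>m ?T) (X ^ (?te + 1))"
    using tau band_add(1)[OF tau(1) one_carrier_mat tau(2) band_one]
      entbd_add(1)[OF tau(1) one_carrier_mat tau(3) entbd_one[OF X, of ?T 0] X, of "?te + 1"] by auto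
  show ?case
  proof (intro allI impI)
    fix l assume l: "l < n"
    let ?sh = "shiftO ?T (?rl l)"
    have sh: "?sh \<in> carrier_mat ?T ?T" "band 1 ?sh" "entbd ?sh (X ^ RE t')"
      using carrier_shift band_shift[where M="?rl l" and t= ?T and a=0] entbd_shift[OF X, where M="?rl l" and t= ?T and a="RE t'"] IH l by auto
    let ?Q = "(?tau + 1\<^sub>m ?T) * ?sh"
    have Q: "?Q \<in> carrier_mat ?T ?T" "band 1 ?Q" "entbd ?Q (X ^ (?T + (?te + 1) + RE t'))"
      using tau1 sh band_mult[OF tau1(1) sh(1) tau1(2) sh(2)]
        entbd_mult[OF tau1(1) sh(1) tau1(3) sh(3) X, of "?T + (?te + 1) + RE t'"] by auto
    let ?R = "1\<^sub>m ?T + ?Q"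
    have R: "?R \<in> carrier_mat ?T ?T" "band 0 ?R" "entbd ?R (X ^ (?T + (?te + 1) + RE t' + 1))"
      using Q band_add(1)[OF one_carrier_mat Q(1) band_one] band_mono[OF Q(2), of 0]
        entbd_add(1)[OF one_carrier_mat Q(1) entbd_one[OF X, of ?T 0] Q(3) X, of "?T + (?te + 1) + RE t' + 1"] by auto
    have Dp: "diag_mat ?T (pf l) \<in> carrier_mat ?T ?T" "band 0 (diag_mat ?T (pf l))" "entbd (diag_mat ?T (pf l)) (X ^ 1)"
      using carrier_diag band_diag entbd_diag[OF X, where t= ?T and d="pf l" and a=1] pf l Suc.prems by auto
    have "rho_all m n phi lf pf ?T l = diag_mat ?T (pf l) * ?R" by (simp add: Let_def)
    then show "rho_all m n phi lf pf ?T l \<in> carrier_mat ?T ?T \<and> band 0 (rho_all m n phi lf pf ?T l)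
      \<and> entbd (rho_all m n phi lf pf ?T l) (X ^ RE ?T)"
      using Dp R band_mult[OF Dp(1) R(1) Dp(2) R(2)]
        entbd_mult[OF Dp(1) R(1) Dp(3) R(3) X, of "RE ?T"] by auto
  qed
qed

definition EE :: "nat \<Rightarrow> nat" where
  "EE t = (t + t + TE t (RE (t - 1))) + (t + t + RE t)"

lemma core:
  assumes X: "(X::real) \<ge> 2" and phi: "\<bar>phi\<bar> \<le> X ^ 1"
    and lf: "\<forall>k<m. \<forall>s\<in>{1..t}. \<bar>lf k s\<bar> \<le> X ^ 2"
    and pf: "\<forall>l<n. \<forall>s\<in>{1..t}. \<bar>pf l s\<bar> \<le> X ^ 1" and t: "t \<ge> 1"
  shows "max (op_norm (tau_hat m n phi lf pf t)) (op_norm (rho_hat m n phi lf pf t)) \<le> X ^ EE t"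
proof -
  have R1: "\<forall>l<n. rho_all m n phi lf pf (t - 1) l \<in> carrier_mat (t - 1) (t - 1) \<and> band 0 (rho_all m n phi lf pf (t - 1) l)
      \<and> entbd (rho_all m n phi lf pf (t - 1) l) (X ^ RE (t - 1))"
    using rho_bound[OF X phi lf pf, of "t - 1"] by auto
  have R2: "\<forall>l<n. rho_all m n phi lf pf t l \<in> carrier_mat t t \<and> band 0 (rho_all m n phi lf pf t l)
      \<and> entbd (rho_all m n phi lf pf t l) (X ^ RE t)"
    using rho_bound[OF X phi lf pf, of t] by auto
  let ?rb = "rho_hat m n phi lf pf (t - 1)"
  have rb: "?rb \<in> carrier_mat (t - 1) (t - 1)" "band 0 ?rb" "entbd ?rb (X ^ RE (t - 1))"
    unfolding rho_hat_def using carrier_avg band_avg[where N=n and t="t - 1" and a=0] entbd_avg[OF X, where N=n and t="t - 1" and a="RE (t - 1)"] R1 by auto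
  have tk: "\<And>k. k < m \<Longrightarrow> tau_k t phi lf ?rb k \<in> carrier_mat t t \<and> entbd (tau_k t phi lf ?rb k) (X ^ TE t (RE (t - 1)))"
    using tau_k_bound[OF X rb phi] lf by blast
  have ta: "tau_hat m n phi lf pf t \<in> carrier_mat t t" "entbd (tau_hat m n phi lf pf t) (X ^ TE t (RE (t - 1)))"
    unfolding tau_hat_def using carrier_avg entbd_avg[OF X, where N=m and t=t] tk by auto
  have rh: "rho_hat m n phi lf pf t \<in> carrier_mat t t" "entbd (rho_hat m n phi lf pf t) (X ^ RE t)"
    unfolding rho_hat_def using carrier_avg entbd_avg[OF X, where N=n and t=t] R2 by auto
  have "op_norm (tau_hat m n phi lf pf t) \<le> X ^ (t + t + TE t (RE (t - 1)))" using op_norm_bound[OF ta X] .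
  also have "\<dots> \<le> X ^ EE t" unfolding EE_def by (rule pow_mono_X[OF X]) simp
  finally have 1: "op_norm (tau_hat m n phi lf pf t) \<le> X ^ EE t" .
  have "op_norm (rho_hat m n phi lf pf t) \<le> X ^ (t + t + RE t)" using op_norm_bound[OF rh X] .
  also have "\<dots> \<le> X ^ EE t" unfolding EE_def by (rule pow_mono_X[OF X]) simp
  finally show ?thesis using 1 by simp
qed



lemma lip_slice:
  assumes "L-lipschitz_on UNIV (\<lambda>(u1, u2). g u1 (F u2 z))"
  shows "L-lipschitz_on (UNIV::real set) (\<lambda>u. (g u (F w z)::real))"
  unfolding lipschitz_on_def
proof (intro conjI ballI)
  show "0 \<le> L" using assms unfolding lipschitz_on_def by auto
  fix x y :: real
  have "dist ((\<lambda>(u1, u2). g u1 (F u2 z)) (x, w)) ((\<lambda>(u1, u2). g u1 (F u2 z)) (y, w)) \<le> L * dist (x, w) (y, w)"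
    using assms unfolding lipschitz_on_def by blast
  then show "dist (g x (F w z)) (g y (F w z)) \<le> L * dist x y" by (simp add: dist_Pair_Pair)
qed

theorem lemma7p1:
  fixes t :: nat
  assumes "t \<ge> 1"
  shows "\<exists>c::real. c > 1 \<and>
    (\<forall>(K::real) (\<Lambda>::real) (m::nat) (n::nat) (A::nat \<Rightarrow> nat \<Rightarrow> real)
       (mustar::nat \<Rightarrow> real) (mu0::nat \<Rightarrow> real) (xi::nat \<Rightarrow> real)
       (F::real \<Rightarrow> real \<Rightarrow> real) (eta::nat \<Rightarrow> real)
       (Lf::nat \<Rightarrow> nat \<Rightarrow> real \<Rightarrow> real \<Rightarrow> real) (Pf::nat \<Rightarrow> nat \<Rightarrow> real \<Rightarrow> real).
      let phi = real m / real n;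
          Y = (\<lambda>k. F (matvec A n mustar k) (xi k));
          lf = gd_lf A m n Y eta Lf Pf mu0;
          pf = gd_pf A m n Y eta Lf Pf mu0
      in
      K \<ge> 2 \<longrightarrow> \<Lambda> \<ge> 2 \<longrightarrow> m \<ge> 1 \<longrightarrow> n \<ge> 1 \<longrightarrow>
      (\<lambda>(x, y). F x y) \<in> borel_measurable borel \<longrightarrow>
      \<comment> \<open>(A1)\<close>
      1 / K \<le> phi \<longrightarrow> phi \<le> K \<longrightarrow>
      \<comment> \<open>step sizes positive, (A3)\<close>
      (\<forall>s. eta s > 0) \<longrightarrow> (\<forall>s<t. eta s \<le> \<Lambda>) \<longrightarrow>
      \<comment> \<open>(A4')\<close>
      (\<forall>s<t. \<forall>l<n. \<bar>Pf (s + 1) l 0\<bar> \<le> \<Lambda> \<and> \<Lambda>-lipschitz_on UNIV (Pf (s + 1) l)) \<longrightarrow>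
      \<comment> \<open>(A5')\<close>
      (\<forall>s<t. \<forall>k<m. \<bar>d1 (Lf s k) 0 (F 0 (xi k))\<bar> \<le> \<Lambda> \<and>
          \<Lambda>-lipschitz_on UNIV (\<lambda>(u1, u2). d1 (Lf s k) u1 (F u2 (xi k)))) \<longrightarrow>
      \<comment> \<open>differentiability so that the estimators are defined\<close>
      (\<forall>s<t. \<forall>k<m. \<forall>x y. (\<lambda>u. Lf s k u y) differentiable (at x) \<and>
          (\<lambda>u. d1 (Lf s k) u y) differentiable (at x)) \<longrightarrow>
      (\<forall>s\<in>{1..t}. \<forall>l<n. \<forall>x. Pf s l differentiable (at x)) \<longrightarrow>
      max (op_norm (tau_hat m n phi lf pf t)) (op_norm (rho_hat m n phi lf pf t))
        \<le> (K * \<Lambda>) powr c)"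
  apply (rule exI[of _ "real (EE t + 2)"])
  apply (intro conjI allI)
   apply simp
  unfolding Let_def
  apply (intro impI)
  subgoal premises p for K \<Lambda> m n A mustar mu0 xi F eta Lf Pf
  proof -
    define X where "X = K * \<Lambda>"
    let ?Y = "\<lambda>k. F (matvec A n mustar k) (xi k)"
    let ?lf = "gd_lf A m n ?Y eta Lf Pf mu0"
    let ?pf = "gd_pf A m n ?Y eta Lf Pf mu0"
    let ?phi = "real m / real n"
    have LX: "\<Lambda> \<le> X" unfolding X_def using p(1,2) mult_right_mono[of 1 K \<Lambda>] by simp
    have X: "X \<ge> 2" using LX p(2) by linarith
    have phi: "\<bar>?phi\<bar> \<le> X ^ 1"
    proof -
      have "?phi \<ge> 0" by simp
      moreover have "K \<le> X" unfolding X_def using p(1,2) mult_left_mono[of 1 \<Lambda> K] by simp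
      ultimately show ?thesis using p(7) by simp
    qed
    have lfb: "\<forall>k<m. \<forall>s\<in>{1..t}. \<bar>?lf k s\<bar> \<le> X ^ 2"
    proof (intro allI impI ballI)
      fix k s assume k: "k < m" and s: "s \<in> {1..t}"
      then have s1: "s - 1 < t" by auto
      let ?x = "matvec A n (gd_mu A m n ?Y eta Lf Pf mu0 (s - 1)) k"
      have lip: "\<Lambda>-lipschitz_on UNIV (\<lambda>u. d1 (Lf (s - 1) k) u (?Y k))"
      proof -
        have "\<Lambda>-lipschitz_on UNIV (\<lambda>(u1, u2). d1 (Lf (s - 1) k) u1 (F u2 (xi k)))" using p(11) s1 k by blast
        then show ?thesis by (rule lip_slice)
      qed
      have dif: "(\<lambda>u. d1 (Lf (s - 1) k) u (?Y k)) differentiable (at ?x)"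
        using p(12) s1 k by blast
      have d: "\<bar>d11 (Lf (s - 1) k) ?x (?Y k)\<bar> \<le> \<Lambda>"
        unfolding d11_def by (rule deriv_lip_bound[OF dif lip])
      have e: "eta (s - 1) \<le> \<Lambda>" "eta (s - 1) > 0" using p(8,9) s1 by auto
      have "\<bar>?lf k s\<bar> = eta (s - 1) * \<bar>d11 (Lf (s - 1) k) ?x (?Y k)\<bar>"
        unfolding gd_lf_def using e by (simp add: abs_mult)
      also have "\<dots> \<le> \<Lambda> * \<Lambda>" using e d by (intro mult_mono) auto
      also have "\<dots> \<le> X * X" using LX p(2) by (intro mult_mono) auto
      finally show "\<bar>?lf k s\<bar> \<le> X ^ 2" by (simp add: power2_eq_square)
    qed
    have pfb: "\<forall>l<n. \<forall>s\<in>{1..t}. \<bar>?pf l s\<bar> \<le> X ^ 1"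
    proof (intro allI impI ballI)
      fix l s assume l: "l < n" and s: "s \<in> {1..t}"
      then have s1: "s - 1 < t" and ss: "s - 1 + 1 = s" by auto
      have "\<Lambda>-lipschitz_on UNIV (Pf (s - 1 + 1) l)" using p(10) s1 l by blast
      then have lip: "\<Lambda>-lipschitz_on UNIV (Pf s l)" by (simp only: ss)
      have dif: "\<And>x. Pf s l differentiable (at x)" using p(13) s l by blast
      have "\<bar>?pf l s\<bar> \<le> \<Lambda>" unfolding gd_pf_def by (rule deriv_lip_bound[OF dif lip])
      then show "\<bar>?pf l s\<bar> \<le> X ^ 1" using LX by simp
    qed
    have "max (op_norm (tau_hat m n ?phi ?lf ?pf t)) (op_norm (rho_hat m n ?phi ?lf ?pf t)) \<le> X ^ EE t"
      by (rule core[OF X phi lfb pfb assms])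
    also have "\<dots> \<le> X ^ (EE t + 2)" by (rule pow_mono_X[OF X]) simp
    also have "\<dots> = X powr real (EE t + 2)" using powr_realpow[of X "EE t + 2"] X by linarith
    finally show ?thesis unfolding X_def .
  qed
  done

end
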